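(* For every $0<\varepsilon\le1$ there is a sequence $(n_j,g_j)$ of pairs of positive integers such that $\frac{C(g_j,n_j)}{n_j}\gtrsim\varepsilon$ and $\frac{g_j}{n_j}\lesssim\varepsilon^2$ as $j\to\infty$.
   Context: A set $S$ of integers is a $B^*[g]\pmod n$ set if for every integer $m$ there are at most $g$ ordered pairs $(s_1,s_2)\in S\times S$ with $s_1+s_2\equiv m\pmod n$. $C(g,n)$ is the largest cardinality of a $B^*[g]\pmod n$ set contained in $\{1,\dots,n\}$. For positive sequences, $a_j\gtrsim b_j$ (equivalently $b_j\lesssim a_j$) means $\liminf_{j\to\infty}a_j/b_j\ge1$. *)

theory Defs
  imports "HOL-Number_Theory.Number_Theory" "HOL-Library.Liminf_Limsup" "HOL-Library.Extended_Real"
begin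

text \<open>S is a B*[g] (mod n) set: for every integer m there are at most g ordered pairs
  (s1,s2) in S x S with s1 + s2 = m (mod n). (The set of such pairs is required to be finite,
  so that the count is meaningful.)\<close>
definition Bstar_mod :: "nat \<Rightarrow> nat \<Rightarrow> int set \<Rightarrow> bool" where
  "Bstar_mod g n S \<longleftrightarrow>
     (\<forall>m::int. finite {(s1, s2). s1 \<in> S \<and> s2 \<in> S \<and> [s1 + s2 = m] (mod int n)}
             \<and> card {(s1, s2). s1 \<in> S \<and> s2 \<in> S \<and> [s1 + s2 = m] (mod int n)} \<le> g)"

definition Cgn :: "nat \<Rightarrow> nat \<Rightarrow> nat" where
  "Cgn g n = Max {card S | S. S \<subseteq> {1..int n} \<and> Bstar_mod g n S}"

definition asymp_ge :: "(nat \<Rightarrow> real) \<Rightarrow> (nat \<Rightarrow> real) \<Rightarrow> bool" where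
  "asymp_ge a b \<longleftrightarrow> liminf (\<lambda>j. ereal (a j / b j)) \<ge> 1"

end

theory Submission
  imports Defs
begin

lemma digits:
  fixes P x y z r :: int
  assumes "0 < P" "0 \<le> x" "x < P" "0 \<le> y" "y < P" "r = x + P*y + P^2*z"
  shows "r mod P = x" "r div P = y + P*z" "(r div P) mod P = y" "r div P^2 = z"
proof -
  have r: "r = x + P*(y + P*z)" using assms(6) by (simp add: power2_eq_square algebra_simps)
  show 1: "r mod P = x" unfolding r using assms by simp
  show 2: "r div P = y + P*z" unfolding r using assms by simp
  show "(r div P) mod P = y" using 2 assms by simp
  have "r div P^2 = r div P div P" by (simp add: power2_eq_square zdiv_zmult2_eq[OF less_imp_le[OF assms(1)]])
  then show "r div P^2 = z" using 2 assms by simp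
qed

lemma decomp:
  fixes P r :: int
  assumes "0 < P"
  shows "r = r mod P + P*((r div P) mod P) + P^2*(r div P^2)"
proof -
  have e: "r div P^2 = r div P div P" by (simp add: power2_eq_square zdiv_zmult2_eq[OF less_imp_le[OF assms(1)]])
  define q where "q = r div P"
  have 1: "r = r mod P + P*q" unfolding q_def by simp
  have 2: "q = q mod P + P * (q div P)" by simp
  have "r = r mod P + P*(q mod P + P * (q div P))" using 1 2 by metis
  moreover have "P*(q mod P + P * (q div P)) = P*(q mod P) + P^2*(q div P)"
    by (simp only: distrib_left power2_eq_square mult.assoc)
  ultimately have "r = r mod P + P*(q mod P) + P^2*(q div P)" by linarith
  then show ?thesis using e q_def by simp
qed

lemma top_digit:
  fixes P r :: int
  assumes "0 < P" "0 \<le> r" "r < P^3"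
  shows "0 \<le> r div P^2" "r div P^2 < P"
proof -
  show "0 \<le> r div P^2" using assms by (simp add: pos_imp_zdiv_nonneg_iff)
  have p2: "0 < P^2" using assms by simp
  have "P^2 * (r div P^2) = r - r mod P^2" by (simp add: minus_mod_eq_mult_div)
  moreover have "0 \<le> r mod P^2" using p2 by simp
  ultimately have le: "P^2 * (r div P^2) \<le> r" by linarith
  show "r div P^2 < P"
  proof (rule ccontr)
    assume "\<not> r div P^2 < P"
    then have "P^2 * P \<le> P^2 * (r div P^2)" using p2 by (simp add: mult_left_mono)
    then have "P^3 \<le> r" using le by (simp add: power3_eq_cube power2_eq_square)
    then show False using assms by simp
  qed
qed

lemma mod_succ_le:
  fixes P d :: int
  assumes "0 < P"
  shows "d mod P \<le> (d - 1) mod P + 1"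
proof -
  have "d mod P = ((d - 1) mod P + 1) mod P" by (simp add: mod_add_left_eq)
  also have "\<dots> \<le> (d - 1) mod P + 1"
    using assms by (simp add: zmod_le_nonneg_dividend)
  finally show ?thesis .
qed

lemma div_step:
  fixes P Y y :: int
  assumes "0 < P" "0 \<le> y" "y < P"
  shows "Y div P - (Y - y) div P \<in> {0, 1}"
proof -
  have a: "Y - y = (Y mod P - y) + P * (Y div P)" by simp
  have b: "(Y - y) div P = (Y mod P - y) div P + Y div P"
  proof -
    have "(Y - y) div P = ((Y mod P - y) + P * (Y div P)) div P" using a by (rule arg_cong)
    also have "\<dots> = (Y mod P - y) div P + Y div P" using assms by simp
    finally show ?thesis .
  qed
  have c: "(Y mod P - y) div P \<in> {-1, 0}"
  proof (cases "Y mod P - y \<ge> 0")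
    case True
    have "(Y mod P - y) div P = 0"
      by (rule div_pos_pos_trivial) (use True assms pos_mod_bound[OF assms(1), of Y] in auto)
    then show ?thesis by simp
  next
    case False
    have "0 \<le> Y mod P" using assms by simp
    then have "Y mod P - y \<ge> -P" using assms by linarith
    then show ?thesis using False assms
    proof -
      have "(Y mod P - y) div P = -1"
        by (rule int_div_pos_eq[where r="Y mod P - y + P"]) (use False \<open>Y mod P - y \<ge> -P\<close> in auto)
      then show ?thesis by simp
    qed
  qed
  show ?thesis using b c by auto
qed


definition Pd :: "int \<Rightarrow> int \<Rightarrow> int \<Rightarrow> bool" where
  "Pd P L r \<longleftrightarrow> (r div P^2 - (r mod P) * ((r div P) mod P)) mod P < L"

definition SS :: "int \<Rightarrow> int \<Rightarrow> int set" where
  "SS P L = {s \<in> {1..P^3}. Pd P L (s - 1)}"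

lemma SS_sub: "SS P L \<subseteq> {1..P^3}" unfolding SS_def by auto

lemma SS_fin: "finite (SS P L)" using finite_subset[OF SS_sub] by blast

lemma small_num:
  fixes P x y z :: int
  assumes "0 < P" "0 \<le> x" "x < P" "0 \<le> y" "y < P" "0 \<le> z" "z < P"
  shows "0 \<le> x + P*y + P^2*z" "x + P*y + P^2*z < P^3"
proof -
  show "0 \<le> x + P*y + P^2*z" using assms by simp
  have "P*z \<le> P*(P-1)" using assms by (intro mult_left_mono) auto
  then have 1: "y + P*z \<le> P*P - 1" using assms by (simp add: algebra_simps)
  have "P*(y + P*z) \<le> P*(P*P - 1)" using 1 assms by (intro mult_left_mono) auto
  then have "x + P*(y + P*z) < P*(P*P)" using assms by (simp add: algebra_simps)
  then show "x + P*y + P^2*z < P^3" by (simp add: power2_eq_square power3_eq_cube algebra_simps)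
qed

lemma mod_sub_cancel:
  fixes P i c :: int
  shows "((i + c) mod P - c) mod P = i mod P"
  by (simp add: mod_diff_left_eq)

lemma SS_card:
  fixes p l :: nat
  assumes "0 < p" "l \<le> p"
  shows "p^2 * l \<le> card (SS (int p) (int l))"
proof -
  define P where "P = int p"
  define L where "L = int l"
  have P0: "0 < P" using assms P_def by simp
  have LP: "L \<le> P" "0 \<le> L" using assms P_def L_def by auto
  define G where "G = (\<lambda>(x,y,i). 1 + x + P*y + P^2*((i + x*y) mod P))"
  define D where "D = {0..<P} \<times> {0..<P} \<times> {0..<L}"
  have memb: "G (x,y,i) \<in> SS P L \<and> (G (x,y,i) - 1) mod P = x \<and> ((G (x,y,i) - 1) div P) mod P = y
      \<and> (G (x,y,i) - 1) div P^2 = (i + x*y) mod P"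
    if "(x,y,i) \<in> D" for x y i
  proof -
    define z where "z = (i + x*y) mod P"
    have r: "0 \<le> x" "x < P" "0 \<le> y" "y < P" "0 \<le> i" "i < L" using that D_def by auto
    have z: "0 \<le> z" "z < P" using P0 z_def by auto
    have g: "G (x,y,i) - 1 = x + P*y + P^2*z" unfolding G_def z_def by simp
    note dg = digits[OF P0 r(1) r(2) r(3) r(4) g]
    have sm: "0 \<le> x + P*y + P^2*z" "x + P*y + P^2*z < P^3" using small_num[OF P0 r(1-4) z] by auto
    have "(z - x*y) mod P = i" unfolding z_def mod_sub_cancel using r LP by simp
    then have "Pd P L (G (x,y,i) - 1)" unfolding Pd_def using dg r by simp
    then have "G (x,y,i) \<in> SS P L" unfolding SS_def using g sm by auto
    then show ?thesis using dg z_def by simp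
  qed
  have inj: "inj_on G D"
  proof (rule inj_onI)
    fix a b assume a: "a \<in> D" and b: "b \<in> D" and e: "G a = G b"
    obtain x y i where ax: "a = (x,y,i)" by (cases a) auto
    obtain x' y' i' where bx: "b = (x',y',i')" by (cases b) auto
    have m1: "(G (x,y,i) - 1) mod P = x \<and> ((G (x,y,i) - 1) div P) mod P = y
      \<and> (G (x,y,i) - 1) div P^2 = (i + x*y) mod P" using memb a ax by blast
    have m2: "(G (x',y',i') - 1) mod P = x' \<and> ((G (x',y',i') - 1) div P) mod P = y'
      \<and> (G (x',y',i') - 1) div P^2 = (i' + x'*y') mod P" using memb b bx by blast
    have xx: "x = x'" "y = y'" using m1 m2 e ax bx by auto
    have "(i + x*y) mod P = (i' + x*y) mod P" using m1 m2 e ax bx xx by auto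
    then have "((i + x*y) mod P - x*y) mod P = ((i' + x*y) mod P - x*y) mod P" by simp
    then have "i mod P = i' mod P" unfolding mod_sub_cancel .
    moreover have "0 \<le> i" "i < P" "0 \<le> i'" "i' < P" using a b ax bx D_def LP by auto
    ultimately have "i = i'" by simp
    then show "a = b" using ax bx xx by simp
  qed
  have sub: "G ` D \<subseteq> SS P L" using memb by auto
  have fin: "finite (SS P L)" by (rule SS_fin)
  have "card (G ` D) \<le> card (SS P L)" using card_mono[OF fin sub] .
  moreover have "card (G ` D) = card D" using card_image[OF inj] .
  moreover have "card D = p * p * l" unfolding D_def P_def L_def by (simp add: card_cartesian_product)
  ultimately show ?thesis unfolding P_def L_def by (simp add: power2_eq_square)
qed


lemma key_step:
  fixes P L M r :: int
  assumes P0: "0 < P" and r0: "0 \<le> r" and rN: "r < P^3" and pd: "Pd P L ((M - r) mod P^3)"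
  shows "(((M - r mod P) div P) div P - ((M - r mod P) mod P) * ((M - r mod P) div P)
          + ((M - r mod P) mod P - r mod P) * ((r div P) mod P)
          - (r div P^2 - (r mod P)*((r div P) mod P)) mod P) mod P \<le> L"
proof -
  define x where "x = r mod P"
  define y where "y = (r div P) mod P"
  define z where "z = r div P^2"
  define i where "i = (z - x*y) mod P"
  define Y where "Y = (M - x) div P"
  define x2 where "x2 = (M - x) mod P"
  have rdec: "r = x + P*y + P^2*z" unfolding x_def y_def z_def using decomp[OF P0] .
  have yb: "0 \<le> y" "y < P" unfolding y_def using P0 by auto
  define q where "q = (M - r) div P^3"
  define r2 where "r2 = (M - r) mod P^3"
  have "r2 = (M - r) - P^3 * q" unfolding r2_def q_def by (simp add: minus_div_mult_eq_mod [symmetric])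
  then have r2eq: "r2 = (M - x) + P*(-(y + P*z + P^2*q))" unfolding rdec
    by (simp add: power2_eq_square power3_eq_cube algebra_simps)
  have Mx: "M - x = x2 + P*Y" unfolding x2_def Y_def by simp
  have r2P: "r2 mod P = x2" unfolding r2eq x2_def by simp
  have r2d: "r2 div P = (Y - y) + P*(-(z + P*q))"
  proof -
    have "r2 div P = ((M - x) + P*(-(y + P*z + P^2*q))) div P" using r2eq by (rule arg_cong)
    also have "\<dots> = -(y + P*z + P^2*q) + (M - x) div P" using P0 by (intro div_mult_self2) simp
    finally show ?thesis unfolding Y_def by (simp add: algebra_simps power2_eq_square)
  qed
  have r2d2: "r2 div P^2 = (Y - y) div P - z - P*q"
  proof -
    have "r2 div P^2 = r2 div P div P"
      by (simp add: power2_eq_square zdiv_zmult2_eq[OF less_imp_le[OF P0]])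
    also have "\<dots> = (Y - y) div P - z - P*q" unfolding r2d using P0 by simp
    finally show ?thesis .
  qed
  have r2m: "(r2 div P) mod P = (Y - y) mod P" unfolding r2d by simp
  have E: "((Y - y) div P - z - P*q - x2 * ((Y - y) mod P)) mod P < L"
    using pd unfolding Pd_def r2_def[symmetric] r2P r2d2 r2m .
  define \<beta> where "\<beta> = Y div P - (Y - y) div P"
  have b01: "\<beta> \<in> {0,1}" unfolding \<beta>_def using div_step[OF P0 yb] .
  define d where "d = Y div P - x2 * Y + (x2 - x) * y - i"
  define k where "k = -q + x2*((Y-y) div P) - (z - x*y) div P"
  have i_eq: "i = (z - x*y) - P*((z - x*y) div P)" unfolding i_def by (simp add: minus_div_mult_eq_mod [symmetric])
  have Ym: "(Y - y) mod P = (Y - y) - P*((Y - y) div P)" by (simp add: minus_div_mult_eq_mod [symmetric])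
  have "(Y - y) div P - z - P*q - x2 * ((Y - y) mod P) = (d - \<beta>) + P*k"
    unfolding Ym d_def \<beta>_def k_def i_eq by (simp add: algebra_simps)
  then have "(d - \<beta>) mod P < L" using E by simp
  then have "d mod P \<le> L"
  proof -
    assume h: "(d - \<beta>) mod P < L"
    show ?thesis
    proof (cases "\<beta> = 0")
      case True then show ?thesis using h by simp
    next
      case False then have "\<beta> = 1" using b01 by simp
      then show ?thesis using h mod_succ_le[OF P0, of d] by simp
    qed
  qed
  then show ?thesis unfolding d_def Y_def x2_def i_def x_def y_def z_def .
qed

lemma line_count:
  fixes P a b :: int and l :: nat
  assumes pr: "prime P" and nd: "\<not> P dvd a"
  shows "card {y \<in> {0..<P}. (b + a*y) mod P \<le> int l} \<le> l + 1"
proof -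
  have P0: "0 < P" using pr prime_gt_0_int by blast
  let ?f = "\<lambda>y. (b + a*y) mod P"
  have inj: "inj_on ?f {y \<in> {0..<P}. (b + a*y) mod P \<le> int l}"
  proof (rule inj_onI)
    fix y y' assume y: "y \<in> {y \<in> {0..<P}. (b + a*y) mod P \<le> int l}"
      and y': "y' \<in> {y \<in> {0..<P}. (b + a*y) mod P \<le> int l}" and e: "?f y = ?f y'"
    have "P dvd (b + a*y) - (b + a*y')" using e by (simp add: mod_eq_dvd_iff)
    then have "P dvd a * (y - y')" by (simp add: algebra_simps)
    then have d: "P dvd (y - y')" using pr nd by (simp add: prime_dvd_mult_iff)
    show "y = y'"
    proof (rule ccontr)
      assume "y \<noteq> y'"
      then have "\<bar>P\<bar> \<le> \<bar>y - y'\<bar>" using d dvd_imp_le_int by simp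
      then show False using y y' P0 by auto
    qed
  qed
  have sub: "?f ` {y \<in> {0..<P}. (b + a*y) mod P \<le> int l} \<subseteq> {0..int l}" using P0 by auto
  have "card {y \<in> {0..<P}. (b + a*y) mod P \<le> int l} = card (?f ` {y \<in> {0..<P}. (b + a*y) mod P \<le> int l})"
    using card_image[OF inj] by simp
  also have "\<dots> \<le> card {0..int l}" using card_mono[OF _ sub] by simp
  also have "\<dots> = l + 1" by simp
  finally show ?thesis .
qed


lemma fin_sub: "finite {y \<in> {0..<(P::int)}. Q y}"
  by (rule finite_subset[of _ "{0..<P}"]) auto

lemma fin_sub2: "finite {y. 0 \<le> y \<and> y < (P::int) \<and> Q y}"
  by (rule finite_subset[of _ "{0..<P}"]) auto

lemma exc_card:
  fixes P M :: int
  assumes pr: "prime P" and P2: "2 < P"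
  shows "card {x \<in> {0..<P}. P dvd ((M - x) mod P - x)} \<le> 1"
proof -
  have key: "P dvd (M - 2*x)" if "P dvd ((M - x) mod P - x)" for x
  proof -
    have "(M - x) mod P - x = (M - 2*x) + P*(-((M - x) div P))"
      by (simp add: minus_div_mult_eq_mod [symmetric] algebra_simps)
    then show ?thesis using that by (metis dvd_add_left_iff dvd_triv_left)
  qed
  have "\<forall>x\<in>{x \<in> {0..<P}. P dvd ((M - x) mod P - x)}. \<forall>x'\<in>{x \<in> {0..<P}. P dvd ((M - x) mod P - x)}. x = x'"
  proof (intro ballI)
    fix x x' assume x: "x \<in> {x \<in> {0..<P}. P dvd ((M - x) mod P - x)}"
      and x': "x' \<in> {x \<in> {0..<P}. P dvd ((M - x) mod P - x)}"
    have "P dvd (M - 2*x) - (M - 2*x')" by (rule dvd_diff) (use key x x' in auto)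
    moreover have "(M - 2*x) - (M - 2*x') = 2 * (x' - x)" by (simp add: algebra_simps)
    ultimately have "P dvd 2 * (x' - x)" by simp
    then have "P dvd 2 \<or> P dvd (x' - x)" using prime_dvd_mult_iff[OF pr] by blast
    moreover have "\<not> P dvd 2" using P2 zdvd_imp_le[of P 2] by auto
    ultimately have d: "P dvd (x' - x)" by blast
    show "x = x'"
    proof (rule ccontr)
      assume "x \<noteq> x'"
      then have "\<bar>P\<bar> \<le> \<bar>x' - x\<bar>" using d dvd_imp_le_int by simp
      then show False using x x' P2 by auto
    qed
  qed
  then show ?thesis using card_le_Suc0_iff_eq[OF fin_sub[of P "\<lambda>x. P dvd ((M - x) mod P - x)"]] by simp
qed

lemma T_card:
  fixes p l :: nat and M :: int and c :: "int \<Rightarrow> int"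
  assumes pr: "prime (int p)" and p2: "2 < p"
  shows "card (SIGMA x:{0..<int p}. SIGMA i:{0..<int l}.
            {y \<in> {0..<int p}. (c x + ((M - x) mod int p - x) * y - i) mod int p \<le> int l}) \<le> p*l*(l+2)"
proof -
  define P where "P = int p"
  define F where "F = (\<lambda>x. card (SIGMA i:{0..<int l}.
            {y \<in> {0..<P}. (c x + ((M - x) mod P - x) * y - i) mod P \<le> int l}))"
  define Ex where "Ex = {x \<in> {0..<P}. P dvd ((M - x) mod P - x)}"
  have cE: "card Ex \<le> 1" unfolding Ex_def P_def using exc_card[of "int p" M] pr p2 by simp
  have Fsum: "F x = (\<Sum>i\<in>{0..<int l}. card {y \<in> {0..<P}. (c x + ((M - x) mod P - x) * y - i) mod P \<le> int l})" for x
    unfolding F_def by (rule card_SigmaI) (auto intro: fin_sub fin_sub2)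
  have F1: "F x \<le> l * p" for x
  proof -
    have "F x \<le> of_nat (card {0..<int l}) * p" unfolding Fsum
    proof (rule sum_bounded_above)
      fix i
      have "card {y \<in> {0..<P}. (c x + ((M - x) mod P - x) * y - i) mod P \<le> int l} \<le> card {0..<P}"
        by (rule card_mono) auto
      then show "card {y \<in> {0..<P}. (c x + ((M - x) mod P - x) * y - i) mod P \<le> int l} \<le> p"
        unfolding P_def by simp
    qed
    then show ?thesis by simp
  qed
  have F2: "F x \<le> l * (l+1)" if "x \<notin> Ex" "x \<in> {0..<P}" for x
  proof -
    have nd: "\<not> P dvd ((M - x) mod P - x)" using that Ex_def by auto
    have "F x \<le> of_nat (card {0..<int l}) * (l+1)" unfolding Fsum
    proof (rule sum_bounded_above)
      fix i
      have "card {y \<in> {0..<P}. ((c x - i) + ((M - x) mod P - x) * y) mod P \<le> int l} \<le> l + 1"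
        using line_count[OF _ nd] pr P_def by blast
      then show "card {y \<in> {0..<P}. (c x + ((M - x) mod P - x) * y - i) mod P \<le> int l} \<le> l + 1"
        by (simp add: algebra_simps)
    qed
    then show ?thesis by simp
  qed
  have ExS: "Ex \<subseteq> {0..<P}" unfolding Ex_def by auto
  have "(\<Sum>x\<in>{0..<P}. F x) = (\<Sum>x\<in>{0..<P} - Ex. F x) + (\<Sum>x\<in>Ex. F x)"
    using sum.subset_diff[OF ExS] by simp
  also have "(\<Sum>x\<in>{0..<P} - Ex. F x) \<le> of_nat (card ({0..<P} - Ex)) * (l * (l+1))"
    by (rule sum_bounded_above) (use F2 in auto)
  also have "(\<Sum>x\<in>Ex. F x) \<le> of_nat (card Ex) * (l * p)"
    by (rule sum_bounded_above) (use F1 in auto)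
  also have "card ({0..<P} - Ex) \<le> p"
  proof -
    have "card ({0..<P} - Ex) \<le> card {0..<P}" by (rule card_mono) auto
    then show ?thesis unfolding P_def by simp
  qed
  finally have "(\<Sum>x\<in>{0..<P}. F x) \<le> p * (l * (l+1)) + card Ex * (l * p)" by simp
  also have "\<dots> \<le> p * (l * (l+1)) + 1 * (l * p)" using cE by (intro add_left_mono mult_right_mono) auto
  also have "\<dots> = p*l*(l+2)" by (simp add: algebra_simps)
  finally have "(\<Sum>x\<in>{0..<P}. F x) \<le> p*l*(l+2)" .
  moreover have "card (SIGMA x:{0..<int p}. SIGMA i:{0..<int l}.
            {y \<in> {0..<int p}. (c x + ((M - x) mod int p - x) * y - i) mod int p \<le> int l}) = (\<Sum>x\<in>{0..<P}. F x)"
    unfolding F_def P_def by (rule card_SigmaI) (auto intro!: finite_SigmaI fin_sub fin_sub2)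
  ultimately show ?thesis by simp
qed


lemma cong_eq_in_range:
  fixes a b N :: int
  assumes "[a = b] (mod N)" "1 \<le> a" "a \<le> N" "1 \<le> b" "b \<le> N"
  shows "a = b"
proof -
  have "(a - 1) mod N = (b - 1) mod N" using assms(1) unfolding cong_def by (metis mod_diff_left_eq)
  moreover have "(a - 1) mod N = a - 1" using assms by simp
  moreover have "(b - 1) mod N = b - 1" using assms by simp
  ultimately show ?thesis by simp
qed

lemma count_bound:
  fixes p l :: nat and m :: int
  assumes pr: "prime p" and p2: "2 < p"
  shows "finite {(s1, s2). s1 \<in> SS (int p) (int l) \<and> s2 \<in> SS (int p) (int l) \<and> [s1 + s2 = m] (mod int (p^3))}
       \<and> card {(s1, s2). s1 \<in> SS (int p) (int l) \<and> s2 \<in> SS (int p) (int l) \<and> [s1 + s2 = m] (mod int (p^3))}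
           \<le> p*l*(l+2)"
proof -
  define P where "P = int p"
  define L where "L = int l"
  define N where "N = P^3"
  define M where "M = m - 2"
  define S where "S = SS P L"
  define A where "A = {(s1, s2). s1 \<in> S \<and> s2 \<in> S \<and> [s1 + s2 = m] (mod N)}"
  have Aeq: "{(s1, s2). s1 \<in> SS (int p) (int l) \<and> s2 \<in> SS (int p) (int l) \<and> [s1 + s2 = m] (mod int (p^3))} = A"
    unfolding A_def S_def P_def L_def N_def by simp
  have P0: "0 < P" using p2 P_def by simp
  have prP: "prime P" using pr P_def by simp
  have P2: "2 < P" using p2 P_def by simp
  have N0: "0 < N" using P0 N_def by simp
  have Ssub: "S \<subseteq> {1..N}" unfolding S_def N_def by (rule SS_sub)
  have finS: "finite S" unfolding S_def by (rule SS_fin)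
  have finA: "finite A"
    by (rule finite_subset[of _ "S \<times> S"]) (auto simp: A_def finS)
  have injA: "inj_on fst A"
  proof (rule inj_onI)
    fix u v assume u: "u \<in> A" and v: "v \<in> A" and e: "fst u = fst v"
    obtain s1 s2 where us: "u = (s1, s2)" by (cases u)
    obtain s1' s2' where vs: "v = (s1', s2')" by (cases v)
    have c1: "[s1 + s2 = m] (mod N)" and c2: "[s1 + s2' = m] (mod N)" using u v us vs e A_def by auto
    have "[s1 + s2 = s1 + s2'] (mod N)" using c1 c2 by (meson cong_sym cong_trans)
    then have "[s2 = s2'] (mod N)" by (simp add: cong_add_lcancel)
    moreover have "s2 \<in> {1..N}" "s2' \<in> {1..N}" using u v us vs A_def Ssub by auto
    ultimately have "s2 = s2'" using cong_eq_in_range[of s2 s2' N] by simp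
    then show "u = v" using us vs e by simp
  qed
  define B where "B = {r \<in> {0..<N}. Pd P L r \<and> Pd P L ((M - r) mod N)}"
  have fstA: "fst ` A \<subseteq> (\<lambda>r. r + 1) ` B"
  proof
    fix s assume "s \<in> fst ` A"
    then obtain s2 where s: "s \<in> S" "s2 \<in> S" "[s + s2 = m] (mod N)" unfolding A_def by auto
    have sr: "1 \<le> s" "s \<le> N" "1 \<le> s2" "s2 \<le> N" using s Ssub by auto
    have pds: "Pd P L (s - 1)" "Pd P L (s2 - 1)" using s unfolding S_def SS_def by auto
    have "N dvd (s + s2) - m" using s(3) by (simp add: cong_iff_dvd_diff cong_sym_eq)
    moreover have "(s2 - 1) - (M - (s - 1)) = (s + s2) - m" unfolding M_def by simp
    ultimately have "N dvd (s2 - 1) - (M - (s - 1))" by metis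
    then have "(s2 - 1) mod N = (M - (s - 1)) mod N" by (simp add: mod_eq_dvd_iff)
    moreover have "(s2 - 1) mod N = s2 - 1" using sr by simp
    ultimately have "Pd P L ((M - (s - 1)) mod N)" using pds by simp
    then have "s - 1 \<in> B" unfolding B_def using sr pds by auto
    then show "s \<in> (\<lambda>r. r + 1) ` B" by (metis diff_add_cancel image_eqI)
  qed
  have finB: "finite B" unfolding B_def by (rule fin_sub)
  define cc where "cc = (\<lambda>x. ((M - x) div P) div P - ((M - x) mod P) * ((M - x) div P))"
  define T where "T = (SIGMA x:{0..<P}. SIGMA i:{0..<L}.
            {y \<in> {0..<P}. (cc x + ((M - x) mod P - x) * y - i) mod P \<le> L})"
  define h where "h = (\<lambda>r. (r mod P, (r div P^2 - (r mod P)*((r div P) mod P)) mod P, (r div P) mod P))"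
  have hT: "h ` B \<subseteq> T"
  proof
    fix t assume "t \<in> h ` B"
    then obtain r where r: "r \<in> B" and t: "t = h r" by auto
    have r0: "0 \<le> r" "r < P^3" and pd1: "Pd P L r" and pd2: "Pd P L ((M - r) mod P^3)"
      using r unfolding B_def N_def by auto
    have ks: "(cc (r mod P) + ((M - r mod P) mod P - r mod P) * ((r div P) mod P)
          - (r div P^2 - (r mod P)*((r div P) mod P)) mod P) mod P \<le> L"
      using key_step[OF P0 r0 pd2] unfolding cc_def .
    have "(r div P^2 - (r mod P)*((r div P) mod P)) mod P < L" using pd1 unfolding Pd_def .
    note ilt = this
    have m1: "0 \<le> r mod P" "r mod P < P" "0 \<le> (r div P) mod P" "(r div P) mod P < P"
      "0 \<le> (r div P^2 - (r mod P)*((r div P) mod P)) mod P" using P0 by auto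
    show "t \<in> T" unfolding t h_def T_def
      by (intro SigmaI) (use m1 ilt ks in simp_all)
  qed
  have injh: "inj_on h B"
  proof (rule inj_onI)
    fix r r' assume r: "r \<in> B" and r': "r' \<in> B" and e: "h r = h r'"
    have rr: "0 \<le> r" "r < P^3" "0 \<le> r'" "r' < P^3" using r r' unfolding B_def N_def by auto
    have xy: "r mod P = r' mod P" "(r div P) mod P = (r' div P) mod P"
      and ii: "(r div P^2 - (r mod P)*((r div P) mod P)) mod P = (r' div P^2 - (r' mod P)*((r' div P) mod P)) mod P"
      using e unfolding h_def by auto
    have z: "r div P^2 = r' div P^2"
    proof -
      have "(r div P^2) mod P = r div P^2" using top_digit[OF P0 rr(1,2)] by simp
      moreover have "(r' div P^2) mod P = r' div P^2" using top_digit[OF P0 rr(3,4)] by simp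
      moreover have "(r div P^2) mod P = (r' div P^2) mod P"
      proof -
        define X where "X = (r mod P)*((r div P) mod P)"
        define X' where "X' = (r' mod P)*((r' div P) mod P)"
        have XX: "X = X'" unfolding X_def X'_def using xy by simp
        have i2: "(r div P^2 - X) mod P = (r' div P^2 - X') mod P" using ii unfolding X_def X'_def .
        have "(r div P^2) mod P = ((r div P^2 - X) mod P + X) mod P" by (metis mod_add_left_eq diff_add_cancel)
        also have "\<dots> = ((r' div P^2 - X') mod P + X') mod P" using i2 XX by simp
        also have "\<dots> = (r' div P^2) mod P" by (metis mod_add_left_eq diff_add_cancel)
        finally show ?thesis .
      qed
      ultimately show ?thesis by linarith
    qed
    have "r mod P + P*((r div P) mod P) + P^2*(r div P^2) = r' mod P + P*((r' div P) mod P) + P^2*(r' div P^2)"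
      using xy z by simp
    then show "r = r'" using decomp[OF P0, of r] decomp[OF P0, of r'] by linarith
  qed
  have "card A = card (fst ` A)" using card_image[OF injA] by simp
  also have "\<dots> \<le> card ((\<lambda>r. r + 1) ` B)" by (rule card_mono) (use finB fstA in auto)
  also have "\<dots> \<le> card B" by (rule card_image_le[OF finB])
  also have "\<dots> = card (h ` B)" using card_image[OF injh] by simp
  also have "\<dots> \<le> card T"
  proof (rule card_mono[OF _ hT])
    show "finite T" unfolding T_def by (auto intro!: finite_SigmaI fin_sub fin_sub2)
  qed
  also have "card T \<le> p*l*(l+2)"
    unfolding T_def P_def L_def using T_card[where p=p and l=l and M=M and c=cc] prP P_def p2 by simp
  finally show ?thesis using Aeq finA by simp
qed


lemma Cgn_ge:
  fixes p l :: nat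
  assumes pr: "prime p" and p2: "2 < p" and lp: "l \<le> p"
  shows "p^2 * l \<le> Cgn (p*l*(l+2)) (p^3)"
proof -
  let ?S = "SS (int p) (int l)"
  have sub: "?S \<subseteq> {1..int (p^3)}" using SS_sub[of "int p" "int l"] by simp
  have bs: "Bstar_mod (p*l*(l+2)) (p^3) ?S"
    unfolding Bstar_mod_def using count_bound[OF pr p2] by blast
  have fin: "finite {card S | S. S \<subseteq> {1..int (p^3)} \<and> Bstar_mod (p*l*(l+2)) (p^3) S}"
  proof (rule finite_subset[of _ "card ` Pow {1..int (p^3)}"])
    show "{card S | S. S \<subseteq> {1..int (p^3)} \<and> Bstar_mod (p*l*(l+2)) (p^3) S} \<subseteq> card ` Pow {1..int (p^3)}"
      by auto
  qed simp
  have "card ?S \<le> Cgn (p*l*(l+2)) (p^3)"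
    unfolding Cgn_def by (rule Max_ge[OF fin]) (use sub bs in blast)
  moreover have "p^2 * l \<le> card ?S" using SS_card[of p l] p2 lp by simp
  ultimately show ?thesis by linarith
qed

theorem proposition3p6:
  fixes \<epsilon> :: real
  assumes "0 < \<epsilon>" and "\<epsilon> \<le> 1"
  shows "\<exists>n g :: nat \<Rightarrow> nat. (\<forall>j. 0 < n j \<and> 0 < g j)
           \<and> asymp_ge (\<lambda>j. real (Cgn (g j) (n j)) / real (n j)) (\<lambda>j. \<epsilon>)
           \<and> asymp_ge (\<lambda>j. \<epsilon>\<^sup>2) (\<lambda>j. real (g j) / real (n j))"
proof -
  have "\<forall>j::nat. \<exists>p::nat. prime p \<and> j + 2 < p" using bigger_prime by blast
  then obtain P :: "nat \<Rightarrow> nat" where hP: "\<And>j. prime (P j) \<and> j + 2 < P j" by metis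
  define l where "l j = nat \<lceil>\<epsilon> * real (P j)\<rceil>" for j
  define n where "n j = P j ^ 3" for j
  define g where "g j = P j * l j * (l j + 2)" for j
  have Ppos: "0 < real (P j)" for j using hP[of j] by simp
  have lge: "\<epsilon> * real (P j) \<le> real (l j)" for j unfolding l_def by (rule real_nat_ceiling_ge)
  have llt: "real (l j) < \<epsilon> * real (P j) + 1" for j
  proof -
    have "0 \<le> \<epsilon> * real (P j)" using assms Ppos[of j] by simp
    then have "real (l j) = of_int \<lceil>\<epsilon> * real (P j)\<rceil>" unfolding l_def by simp
    then show ?thesis using ceiling_correct[of "\<epsilon> * real (P j)"] by linarith
  qed
  have lle: "l j \<le> P j" for j
  proof -
    have "\<epsilon> * real (P j) \<le> 1 * real (P j)" using assms Ppos[of j] by (intro mult_right_mono) auto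
    then show ?thesis unfolding l_def by simp
  qed
  have lpos: "0 < l j" for j
  proof -
    have "0 < \<epsilon> * real (P j)" using assms Ppos[of j] by simp
    then show ?thesis using lge[of j] by simp
  qed
  have pos: "\<forall>j. 0 < n j \<and> 0 < g j"
    using hP lpos unfolding n_def g_def by (metis add_gr_0 mult_pos_pos prime_gt_0_nat zero_less_power)
  have C: "real (P j)^2 * real (l j) \<le> real (Cgn (g j) (n j))" for j
  proof -
    have "P j^2 * l j \<le> Cgn (g j) (n j)" unfolding g_def n_def
      using Cgn_ge[of "P j" "l j"] hP[of j] lle[of j] by simp
    then show ?thesis by (metis of_nat_le_iff of_nat_mult of_nat_power)
  qed
  have A1: "asymp_ge (\<lambda>j. real (Cgn (g j) (n j)) / real (n j)) (\<lambda>j. \<epsilon>)"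
    unfolding asymp_ge_def
  proof (rule Liminf_bounded, rule always_eventually, rule allI)
    fix j
    let ?p = "real (P j)"
    have "\<epsilon> * ?p^3 = ?p^2 * (\<epsilon> * ?p)" by (simp add: power2_eq_square power3_eq_cube)
    also have "\<dots> \<le> ?p^2 * real (l j)" using lge[of j] by (intro mult_left_mono) auto
    also have "\<dots> \<le> real (Cgn (g j) (n j))" using C .
    finally have "\<epsilon> * real (n j) \<le> real (Cgn (g j) (n j))" unfolding n_def by simp
    then have "\<epsilon> \<le> real (Cgn (g j) (n j)) / real (n j)" using pos by (simp add: pos_le_divide_eq)
    then have "1 \<le> real (Cgn (g j) (n j)) / real (n j) / \<epsilon>" using assms(1) by (metis le_divide_eq_1_pos)
    then show "(1::ereal) \<le> ereal (real (Cgn (g j) (n j)) / real (n j) / \<epsilon>)" by simp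
  qed
  define h where "h j = \<epsilon>^2 / (\<epsilon>^2 + 7 * inverse (real (Suc j)))" for j
  have hlim: "h \<longlonglongrightarrow> 1"
  proof -
    have "(\<lambda>j. 7 * inverse (real (Suc j))) \<longlonglongrightarrow> 7 * 0"
      by (intro tendsto_mult tendsto_const LIMSEQ_inverse_real_of_nat)
    then have "(\<lambda>j. \<epsilon>^2 / (\<epsilon>^2 + 7 * inverse (real (Suc j)))) \<longlonglongrightarrow> \<epsilon>^2 / (\<epsilon>^2 + 7 * 0)"
      using assms by (intro tendsto_divide tendsto_add tendsto_const) auto
    then show ?thesis unfolding h_def using assms by simp
  qed
  have hle: "h j \<le> \<epsilon>^2 / (real (g j) / real (n j))" for j
  proof -
    let ?p = "real (P j)" and ?L = "real (l j)"
    have pj: "real j + 1 \<le> ?p" using hP[of j] by linarith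
    have L0: "0 < ?L" using lpos[of j] by simp
    have "?L * (?L + 2) \<le> (\<epsilon> * ?p + 1) * (\<epsilon> * ?p + 3)"
      using llt[of j] L0 by (intro mult_mono) auto
    also have "\<dots> = \<epsilon>^2 * ?p^2 + 4 * (\<epsilon> * ?p) + 3" by (simp add: power2_eq_square algebra_simps)
    also have "\<dots> \<le> \<epsilon>^2 * ?p^2 + 7 * ?p"
    proof -
      have "\<epsilon> * ?p \<le> ?p" using assms Ppos[of j] by (simp add: mult_le_cancel_right1)
      moreover have "1 \<le> ?p" using hP[of j] by simp
      ultimately show ?thesis by linarith
    qed
    also have "\<dots> \<le> ?p^2 * (\<epsilon>^2 + 7 * inverse (real (Suc j)))"
    proof -
      have "7 * ?p = ?p^2 * (7 * inverse ?p)" using Ppos[of j] by (simp add: power2_eq_square field_simps)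
      also have "\<dots> \<le> ?p^2 * (7 * inverse (real (Suc j)))"
        using pj by (intro mult_left_mono) (auto simp: le_imp_inverse_le)
      finally show ?thesis by (simp add: algebra_simps)
    qed
    finally have key: "?L * (?L + 2) \<le> ?p^2 * (\<epsilon>^2 + 7 * inverse (real (Suc j)))" .
    have gn: "real (g j) / real (n j) = ?L * (?L + 2) / ?p^2"
      unfolding g_def n_def using Ppos[of j] by (simp add: power2_eq_square power3_eq_cube field_simps)
    have d0: "0 < \<epsilon>^2 + 7 * inverse (real (Suc j))" using assms by (simp add: add_pos_nonneg)
    have "h j = \<epsilon>^2 * ?p^2 / (?p^2 * (\<epsilon>^2 + 7 * inverse (real (Suc j))))"
      unfolding h_def using Ppos[of j] by simp
    also have "\<dots> \<le> \<epsilon>^2 * ?p^2 / (?L * (?L + 2))"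
      using key L0 assms Ppos[of j] d0 by (intro divide_left_mono) (auto intro!: mult_pos_pos)
    also have "\<dots> = \<epsilon>^2 / (real (g j) / real (n j))" unfolding gn using Ppos[of j] by simp
    finally show ?thesis .
  qed
  have A2: "asymp_ge (\<lambda>j. \<epsilon>\<^sup>2) (\<lambda>j. real (g j) / real (n j))"
    unfolding asymp_ge_def
  proof -
    have t: "(\<lambda>j. ereal (h j)) \<longlonglongrightarrow> ereal 1" using hlim by (rule tendsto_ereal)
    have "liminf (\<lambda>j. ereal (h j)) = ereal 1"
      by (rule lim_imp_Liminf[OF trivial_limit_sequentially t])
    then have "liminf (\<lambda>j. ereal (h j)) = 1" by (simp add: one_ereal_def)
    moreover have "liminf (\<lambda>j. ereal (h j)) \<le> liminf (\<lambda>j. ereal (\<epsilon>^2 / (real (g j) / real (n j))))"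
      by (rule Liminf_mono) (use hle in simp)
    ultimately show "1 \<le> liminf (\<lambda>j. ereal (\<epsilon>^2 / (real (g j) / real (n j))))" by simp
  qed
  show ?thesis using pos A1 A2 by blast
qed

end
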